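(* Let $c$ be a positive integer, $\langle H,M,T\rangle$ an abduction instance with $H=\{h_1,\ldots,h_{|H|}\}$, $r=|Var(T)\setminus H|$ with the variables of $T$ outside $H$ named $x_1,\ldots,x_r$, and \[g_c(\langle H,M,T\rangle)=\langle H\cup\{h_{|H|+1},\ldots,h_c\},\,M,\,T\cup\{x_{r+1}\vee\neg x_{r+1},\ldots,x_c\vee\neg x_c\}\rangle\] with fresh variables $h_{|H|+1},\ldots,h_c,x_{r+1},\ldots,x_c$. If $\preceq$ is an irredundant ordering, then $SOL_\preceq(g_c(\langle H,M,T\rangle))=SOL_\preceq(\langle H,M,T\rangle)$.
   Context: An abduction instance is a triple $\langle H,M,T\rangle$ where $T$ is a propositional theory in 3CNF, $H$ a set of propositional variables, $M$ a set of propositional variables. $SOL(H,M,T)=\{H'\subseteq H\mid H'\cup T\text{ consistent and } H'\cup T\models M\}$. An ordering $\preceq$ is a well-founded preorder on sets of variables; $SOL_\preceq(H,M,T)$ is the set of $H'\in SOL(H,M,T)$ such that no $H''\in SOL(H,M,T)$ satisfies $H''\prec H'$. The ordering is irredundant if $H'\subset H''$ implies $H'\prec H''$. $Var(T)$ is the set of variables occurring in $T$. *)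

theory Defs
  imports Main
begin

datatype 'v lit = Pos 'v | Neg 'v

type_synonym 'v clause = "'v lit set"
type_synonym 'v cnf = "'v clause set"

fun lit_var :: "'v lit \<Rightarrow> 'v" where
  "lit_var (Pos x) = x" | "lit_var (Neg x) = x"

fun sat_lit :: "('v \<Rightarrow> bool) \<Rightarrow> 'v lit \<Rightarrow> bool" where
  "sat_lit a (Pos x) = a x" | "sat_lit a (Neg x) = (\<not> a x)"

definition models :: "('v \<Rightarrow> bool) \<Rightarrow> 'v cnf \<Rightarrow> bool" where
  "models a T \<longleftrightarrow> (\<forall>C\<in>T. \<exists>l\<in>C. sat_lit a l)"

definition is_3cnf :: "'v cnf \<Rightarrow> bool" where
  "is_3cnf T \<longleftrightarrow> finite T \<and> (\<forall>C\<in>T. finite C \<and> 1 \<le> card C \<and> card C \<le> 3)"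

definition Var :: "'v cnf \<Rightarrow> 'v set" where
  "Var T = (\<Union>C\<in>T. lit_var ` C)"

text \<open>H' \<union> T consistent (variables of H' read as positive unit facts).\<close>
definition consistent :: "'v set \<Rightarrow> 'v cnf \<Rightarrow> bool" where
  "consistent H' T \<longleftrightarrow> (\<exists>a. (\<forall>h\<in>H'. a h) \<and> models a T)"

definition entails :: "'v set \<Rightarrow> 'v cnf \<Rightarrow> 'v set \<Rightarrow> bool" where
  "entails H' T M \<longleftrightarrow> (\<forall>a. (\<forall>h\<in>H'. a h) \<and> models a T \<longrightarrow> (\<forall>m\<in>M. a m))"

type_synonym 'v abd_inst = "'v set \<times> 'v set \<times> 'v cnf"

definition abduction_instance :: "'v abd_inst \<Rightarrow> bool" where
  "abduction_instance I = (case I of (H, M, T) \<Rightarrow> finite H \<and> is_3cnf T)"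

definition SOL :: "'v abd_inst \<Rightarrow> 'v set set" where
  "SOL I = (case I of (H, M, T) \<Rightarrow>
     {H'. H' \<subseteq> H \<and> consistent H' T \<and> entails H' T M})"

definition strict :: "('a \<Rightarrow> 'a \<Rightarrow> bool) \<Rightarrow> 'a \<Rightarrow> 'a \<Rightarrow> bool" where
  "strict le A B \<longleftrightarrow> le A B \<and> \<not> le B A"

definition ordering_wf :: "('v set \<Rightarrow> 'v set \<Rightarrow> bool) \<Rightarrow> bool" where
  "ordering_wf le \<longleftrightarrow> (\<forall>A. le A A) \<and> (\<forall>A B C. le A B \<longrightarrow> le B C \<longrightarrow> le A C)
     \<and> wfP (strict le)"

definition irredundant :: "('v set \<Rightarrow> 'v set \<Rightarrow> bool) \<Rightarrow> bool" where
  "irredundant le \<longleftrightarrow> (\<forall>A B. A \<subset> B \<longrightarrow> strict le A B)"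

definition SOL_ord :: "('v set \<Rightarrow> 'v set \<Rightarrow> bool) \<Rightarrow> 'v abd_inst \<Rightarrow> 'v set set" where
  "SOL_ord le I = {H' \<in> SOL I. \<not> (\<exists>H''\<in>SOL I. strict le H'' H')}"

text \<open>g_c with the fresh hypotheses NH = {h_{|H|+1},...,h_c} and
  fresh variables NX = {x_{r+1},...,x_c}.\<close>
definition g_inst :: "'v set \<Rightarrow> 'v set \<Rightarrow> 'v abd_inst \<Rightarrow> 'v abd_inst" where
  "g_inst NH NX I = (case I of (H, M, T) \<Rightarrow>
     (H \<union> NH, M, T \<union> {{Pos x, Neg x} | x. x \<in> NX}))"

end

theory Submission
  imports Defs
begin

lemma models_taut: "models a (T \<union> {{Pos x, Neg x} | x. x \<in> NX}) = models a T"
  unfolding models_def by auto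

lemma models_upd:
  assumes "NH \<inter> Var T = {}"
  shows "models (\<lambda>v. if v \<in> NH then True else a v) T = models a T"
proof -
  have "\<And>C l. C \<in> T \<Longrightarrow> l \<in> C \<Longrightarrow> sat_lit (\<lambda>v. if v \<in> NH then True else a v) l = sat_lit a l"
  proof -
    fix C l assume "C \<in> T" "l \<in> C"
    then have "lit_var l \<notin> NH" using assms unfolding Var_def by blast
    then show "sat_lit (\<lambda>v. if v \<in> NH then True else a v) l = sat_lit a l"
      by (cases l) auto
  qed
  then show ?thesis unfolding models_def by blast
qed

lemma strict_trans:
  assumes "ordering_wf le" "strict le A B" "strict le B C"
  shows "strict le A C"
  using assms unfolding ordering_wf_def strict_def by blast

theorem lemma4:
  fixes c :: nat and H M :: "'v set" and T :: "'v cnf"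
    and NH NX :: "'v set" and le :: "'v set \<Rightarrow> 'v set \<Rightarrow> bool"
  assumes "c \<ge> 1"
    and "abduction_instance (H, M, T)"
    and "finite NH" "card NH = c - card H" "NH \<inter> (H \<union> M \<union> Var T) = {}"
    and "finite NX" "card NX = c - card (Var T - H)"
    and "NX \<inter> (H \<union> M \<union> Var T \<union> NH) = {}"
    and "ordering_wf le" "irredundant le"
  shows "SOL_ord le (g_inst NH NX (H, M, T)) = SOL_ord le (H, M, T)"
proof -
  define S where "S = SOL (H, M, T)"
  define S' where "S' = SOL (g_inst NH NX (H, M, T))"
  have S'eq: "S' = {H'. H' \<subseteq> H \<union> NH \<and> consistent H' T \<and> entails H' T M}"
    unfolding S'_def SOL_def g_inst_def consistent_def entails_def
    by (simp only: models_taut prod.case)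
  have Seq: "S = {H'. H' \<subseteq> H \<and> consistent H' T \<and> entails H' T M}"
    unfolding S_def SOL_def by simp
  have sub: "S \<subseteq> S'" unfolding S'eq Seq by auto
  have dis: "NH \<inter> Var T = {}" "NH \<inter> M = {}" using assms(5) by auto
  have red: "X - NH \<in> S" if "X \<in> S'" for X
  proof -
    have c: "consistent (X - NH) T" using that unfolding S'eq consistent_def by blast
    have "entails (X - NH) T M"
      unfolding entails_def
    proof (intro allI impI)
      fix a assume a: "(\<forall>h\<in>X - NH. a h) \<and> models a T"
      let ?a = "\<lambda>v. if v \<in> NH then True else a v"
      have "(\<forall>h\<in>X. ?a h) \<and> models ?a T" using a models_upd[OF dis(1)] by auto
      then have "\<forall>m\<in>M. ?a m" using that unfolding S'eq entails_def by blast
      then show "\<forall>m\<in>M. a m" using dis(2) by (metis IntI empty_iff)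
    qed
    then show ?thesis using c that unfolding S'eq Seq by auto
  qed
  have strsub: "strict le A B" if "A \<subset> B" for A B
    using assms(10) that unfolding irredundant_def by blast
  have "SOL_ord le (g_inst NH NX (H, M, T)) = {X \<in> S'. \<not> (\<exists>Y\<in>S'. strict le Y X)}"
    unfolding SOL_ord_def S'_def by simp
  also have "\<dots> = {X \<in> S. \<not> (\<exists>Y\<in>S. strict le Y X)}"
  proof (intro set_eqI iffI)
    fix X assume X: "X \<in> {X \<in> S'. \<not> (\<exists>Y\<in>S'. strict le Y X)}"
    have "X - NH = X"
    proof (rule ccontr)
      assume "X - NH \<noteq> X"
      then have "X - NH \<subset> X" by blast
      then have "strict le (X - NH) X" by (rule strsub)
      then show False using X red sub by blast
    qed
    then have "X \<in> S" using red X by (metis (no_types, lifting) mem_Collect_eq)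
    then show "X \<in> {X \<in> S. \<not> (\<exists>Y\<in>S. strict le Y X)}" using X sub by blast
  next
    fix X assume X: "X \<in> {X \<in> S. \<not> (\<exists>Y\<in>S. strict le Y X)}"
    have "\<not> strict le Y X" if "Y \<in> S'" for Y
    proof
      assume st: "strict le Y X"
      show False
      proof (cases "Y - NH = Y")
        case True then show ?thesis using red[OF that] X st by auto
      next
        case False
        then have "strict le (Y - NH) Y" by (intro strsub) blast
        then have "strict le (Y - NH) X" using strict_trans[OF assms(9)] st by blast
        then show ?thesis using red[OF that] X by blast
      qed
    qed
    then show "X \<in> {X \<in> S'. \<not> (\<exists>Y\<in>S'. strict le Y X)}" using X sub by blast
  qed
  also have "\<dots> = SOL_ord le (H, M, T)" unfolding SOL_ord_def S_def by simp
  finally show ?thesis .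
qed

end
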